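(* With probability $1$, the graphs $G(X^{(n)})$ and $G^\prime(X^{(n)})$ have the same connected components.
   Context: Fix an integer $d\ge2$ and $n\ge1$. $\mathbb{T}_n$ is the torus obtained from $[-n/2,n/2]^d$ by identifying opposite faces, with toroidal distance ${\rm d}_{\mathbb{T}_n}$ and $B^{\mathbb{T}_n}_r(\xi)=\{\eta\in\mathbb{T}_n:{\rm d}_{\mathbb{T}_n}(\xi,\eta)\le r\}$. $R$ is a nonnegative random variable with absolutely continuous distribution such that $\lim_{h\to\infty}h^s\mathbb{P}(R>h)=\beta$ for some $\beta,s\in(0,\infty)$. $X^{(n)}$ is a homogeneous Poisson point process of intensity $1$ on $\mathbb{T}_n$, each point independently marked with a mark in $[0,\infty)$ distributed as $R$ (points written $(\xi,r)$). $G(X^{(n)})$ has vertex set $X^{(n)}$ and a directed edge from $(\xi,r)$ to $(\eta,t)$ whenever $\eta\in B^{\mathbb{T}_n}_r(\xi)$. $G^\prime(X^{(n)})$ has vertex set $X^{(n)}$ and a directed edge from $(\xi,r)$ to $(\eta,t)$ iff $(\eta,t)\in B^{\mathbb{T}_n}_r(\xi)\times[0,r)$ and there is no $(\zeta,w)\in X^{(n)}\cap(B^{\mathbb{T}_n}_r(\xi)\times(t,r))$ with $\eta\in B^{\mathbb{T}_n}_w(\zeta)$. Connected components are taken ignoring edge directions. *)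

theory Defs
  imports "HOL-Probability.Probability"
begin

text \<open>Points of the torus T_n are represented by their representatives in the cube
  [-n/2, n/2]^d, where d = CARD('d).  Marked points are pairs (xi, r).\<close>

definition tor_dist :: "nat \<Rightarrow> real^'d \<Rightarrow> real^'d \<Rightarrow> real" where
  "tor_dist n x y = (INF k \<in> {k :: real^'d. \<forall>i. k $ i \<in> \<int>}. norm (x - y - real n *\<^sub>R k))"

definition torus_cube :: "nat \<Rightarrow> (real^'d) set" where
  "torus_cube n = cbox (\<chi> i. - real n / 2) (\<chi> i. real n / 2)"

definition edges_G :: "nat \<Rightarrow> ((real^'d) \<times> real) set \<Rightarrow> (((real^'d) \<times> real) \<times> ((real^'d) \<times> real)) set" where
  "edges_G n X = {((\<xi>, r), (\<eta>, t)). (\<xi>, r) \<in> X \<and> (\<eta>, t) \<in> X \<and> tor_dist n \<xi> \<eta> \<le> r}"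

definition edges_G' :: "nat \<Rightarrow> ((real^'d) \<times> real) set \<Rightarrow> (((real^'d) \<times> real) \<times> ((real^'d) \<times> real)) set" where
  "edges_G' n X = {((\<xi>, r), (\<eta>, t)). (\<xi>, r) \<in> X \<and> (\<eta>, t) \<in> X \<and>
      tor_dist n \<xi> \<eta> \<le> r \<and> 0 \<le> t \<and> t < r \<and>
      \<not> (\<exists>(\<zeta>, w) \<in> X. tor_dist n \<xi> \<zeta> \<le> r \<and> t < w \<and> w < r \<and> tor_dist n \<zeta> \<eta> \<le> w)}"

definition components :: "'a set \<Rightarrow> ('a \<times> 'a) set \<Rightarrow> 'a set set" where
  "components V E = (\<lambda>u. {v \<in> V. (u, v) \<in> (E \<union> E\<inverse>)\<^sup>*}) ` V"

definition marked_point_law :: "nat \<Rightarrow> real measure \<Rightarrow> ((real^'d) \<times> real) measure" where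
  "marked_point_law n PR = uniform_measure lborel (torus_cube n) \<Otimes>\<^sub>M PR"

text \<open>Poisson process of intensity 1 on T_n with i.i.d. marks: a Poisson(n^d) number N of points,
  together with an i.i.d. sequence of marked points; the configuration is the first N of them.\<close>
definition poisson_space :: "nat \<Rightarrow> real measure \<Rightarrow> (nat \<times> (nat \<Rightarrow> (real^'d) \<times> real)) measure" where
  "poisson_space n PR = measure_pmf (poisson_pmf (real n ^ CARD('d)))
      \<Otimes>\<^sub>M (\<Pi>\<^sub>M i\<in>(UNIV :: nat set). marked_point_law n PR)"

definition config :: "nat \<times> (nat \<Rightarrow> (real^'d) \<times> real) \<Rightarrow> ((real^'d) \<times> real) set" where
  "config c = snd c ` {..<fst c}"

end

theory Submission
  imports Defs
begin


lemma tor_dist_sym: "tor_dist n x y = tor_dist n y x"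
proof -
  let ?L = "{k :: real^'a. \<forall>i. k $ i \<in> \<int>}"
  have "(\<lambda>k. norm (x - y - real n *\<^sub>R k)) ` ?L = (\<lambda>k. norm (y - x - real n *\<^sub>R k)) ` ?L"
  proof -
    have *: "norm (a - b - real n *\<^sub>R k) = norm (b - a - real n *\<^sub>R (- k))" for a b k :: "real^'a"
      by (metis (no_types, lifting) add.commute diff_diff_eq minus_diff_eq norm_minus_cancel scaleR_minus_right diff_minus_eq_add)
    have m: "k \<in> ?L \<Longrightarrow> - k \<in> ?L" for k by (auto simp: Ints_minus)
    show ?thesis
    proof (intro set_eqI iffI)
      fix v assume "v \<in> (\<lambda>k. norm (x - y - real n *\<^sub>R k)) ` ?L"
      then obtain k where "k \<in> ?L" "v = norm (x - y - real n *\<^sub>R k)" by blast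
      then show "v \<in> (\<lambda>k. norm (y - x - real n *\<^sub>R k)) ` ?L" using *[of x y k] m by blast
    next
      fix v assume "v \<in> (\<lambda>k. norm (y - x - real n *\<^sub>R k)) ` ?L"
      then obtain k where "k \<in> ?L" "v = norm (y - x - real n *\<^sub>R k)" by blast
      then show "v \<in> (\<lambda>k. norm (x - y - real n *\<^sub>R k)) ` ?L" using *[of y x k] m by blast
    qed
  qed
  then show ?thesis unfolding tor_dist_def by simp
qed

lemma key_step:
  fixes X :: "((real^'d) \<times> real) set"
  assumes fin: "finite X"
    and dist: "\<And>p q. p \<in> X \<Longrightarrow> q \<in> X \<Longrightarrow> snd p = snd q \<Longrightarrow> p = q"
    and nn: "\<And>p. p \<in> X \<Longrightarrow> 0 \<le> snd p"
  shows "x \<in> X \<Longrightarrow> y \<in> X \<Longrightarrow> snd y < snd x \<Longrightarrow> tor_dist n (fst x) (fst y) \<le> snd x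
     \<Longrightarrow> (x, y) \<in> (edges_G' n X \<union> (edges_G' n X)\<inverse>)\<^sup>*"
proof (induction "card {p \<in> X. snd y < snd p \<and> snd p < snd x}" arbitrary: x y rule: less_induct)
  case less
  let ?S = "edges_G' n X \<union> (edges_G' n X)\<inverse>"
  obtain \<xi> r where x: "x = (\<xi>, r)" by force
  obtain \<eta> t where y: "y = (\<eta>, t)" by force
  show ?case
  proof (cases "\<exists>(\<zeta>, w) \<in> X. tor_dist n \<xi> \<zeta> \<le> r \<and> t < w \<and> w < r \<and> tor_dist n \<zeta> \<eta> \<le> w")
    case False
    then have "(x, y) \<in> edges_G' n X"
      using less.prems nn[of y] unfolding x y edges_G'_def by auto
    then show ?thesis by auto
  next
    case True
    then obtain \<zeta> w where z: "(\<zeta>, w) \<in> X" "tor_dist n \<xi> \<zeta> \<le> r" "t < w" "w < r" "tor_dist n \<zeta> \<eta> \<le> w"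
      by blast
    have sub1: "{p \<in> X. w < snd p \<and> snd p < snd x} \<subset> {p \<in> X. snd y < snd p \<and> snd p < snd x}"
    proof (rule psubsetI)
      show "{p \<in> X. w < snd p \<and> snd p < snd x} \<subseteq> {p \<in> X. snd y < snd p \<and> snd p < snd x}"
        using z x y by auto
      have "(\<zeta>, w) \<in> {p \<in> X. snd y < snd p \<and> snd p < snd x}" "(\<zeta>, w) \<notin> {p \<in> X. w < snd p \<and> snd p < snd x}"
        using z x y by auto
      then show "{p \<in> X. w < snd p \<and> snd p < snd x} \<noteq> {p \<in> X. snd y < snd p \<and> snd p < snd x}" by blast
    qed
    have sub2: "{p \<in> X. snd y < snd p \<and> snd p < w} \<subset> {p \<in> X. snd y < snd p \<and> snd p < snd x}"
    proof (rule psubsetI)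
      show "{p \<in> X. snd y < snd p \<and> snd p < w} \<subseteq> {p \<in> X. snd y < snd p \<and> snd p < snd x}"
        using z x y by auto
      have "(\<zeta>, w) \<in> {p \<in> X. snd y < snd p \<and> snd p < snd x}" "(\<zeta>, w) \<notin> {p \<in> X. snd y < snd p \<and> snd p < w}"
        using z x y by auto
      then show "{p \<in> X. snd y < snd p \<and> snd p < w} \<noteq> {p \<in> X. snd y < snd p \<and> snd p < snd x}" by blast
    qed
    have c1: "card {p \<in> X. w < snd p \<and> snd p < snd x} < card {p \<in> X. snd y < snd p \<and> snd p < snd x}"
      using sub1 fin by (intro psubset_card_mono) auto
    have c2: "card {p \<in> X. snd y < snd p \<and> snd p < w} < card {p \<in> X. snd y < snd p \<and> snd p < snd x}"
      using sub2 fin by (intro psubset_card_mono) auto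
    have 1: "(x, (\<zeta>, w)) \<in> ?S\<^sup>*"
      apply (rule less.hyps[where x=x and y="(\<zeta>, w)"])
      using c1 less.prems z x y by simp_all
    have 2: "((\<zeta>, w), y) \<in> ?S\<^sup>*"
      apply (rule less.hyps[where x="(\<zeta>, w)" and y=y])
      using c2 less.prems z x y by simp_all
    from 1 2 show ?thesis by (rule rtrancl_trans)
  qed
qed

lemma det_components:
  fixes X :: "((real^'d) \<times> real) set"
  assumes fin: "finite X"
    and dist: "\<And>p q. p \<in> X \<Longrightarrow> q \<in> X \<Longrightarrow> snd p = snd q \<Longrightarrow> p = q"
    and nn: "\<And>p. p \<in> X \<Longrightarrow> 0 \<le> snd p"
  shows "components X (edges_G n X) = components X (edges_G' n X)"
proof -
  let ?S = "edges_G' n X \<union> (edges_G' n X)\<inverse>"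
  let ?R = "edges_G n X \<union> (edges_G n X)\<inverse>"
  have sub: "edges_G' n X \<subseteq> edges_G n X" unfolding edges_G'_def edges_G_def by auto
  have e: "(x, y) \<in> ?S\<^sup>*" if "(x, y) \<in> edges_G n X" for x y
  proof -
    obtain \<xi> r where x: "x = (\<xi>, r)" by force
    obtain \<eta> t where y: "y = (\<eta>, t)" by force
    have X: "x \<in> X" "y \<in> X" and d: "tor_dist n \<xi> \<eta> \<le> r" using that unfolding x y edges_G_def by auto
    consider "t < r" | "t = r" | "r < t" by (rule linorder_cases)
    then show ?thesis
    proof cases
      case 1 show ?thesis
        by (rule key_step[OF fin dist nn X]) (use d x y 1 in simp_all)
    next
      case 2 then have "x = y" using dist[OF X] x y by simp
      then show ?thesis by simp
    next
      case 3
      have d': "tor_dist n \<eta> \<xi> \<le> t" using d 3 tor_dist_sym[of n \<xi> \<eta>] by linarith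
      have "(y, x) \<in> ?S\<^sup>*"
        by (rule key_step[OF fin dist nn X(2) X(1)]) (use d' x y 3 in simp_all)
      then have "(x, y) \<in> (?S\<^sup>*)\<inverse>" by simp
      also have "(?S\<^sup>*)\<inverse> = ?S\<^sup>*" by (simp add: rtrancl_converse[symmetric] converse_Un Un_commute)
      finally show ?thesis .
    qed
  qed
  have "?R \<subseteq> ?S\<^sup>*"
  proof
    fix p assume "p \<in> ?R"
    then show "p \<in> ?S\<^sup>*"
    proof
      assume "p \<in> edges_G n X"
      moreover obtain a b where ab: "p = (a, b)" using surj_pair[of p] by blast
      ultimately have "(a, b) \<in> ?S\<^sup>*" by (intro e) simp
      then show ?thesis using ab by simp
    next
      assume "p \<in> (edges_G n X)\<inverse>"
      moreover obtain a b where ab: "p = (a, b)" using surj_pair[of p] by blast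
      ultimately have "(b, a) \<in> edges_G n X" by simp
      then have "(snd p, fst p) \<in> ?S\<^sup>*" using ab e by simp
      then have "(fst p, snd p) \<in> (?S\<^sup>*)\<inverse>" by (simp only: converse_iff)
      also have "(?S\<^sup>*)\<inverse> = ?S\<^sup>*" by (simp add: rtrancl_converse[symmetric] converse_Un Un_commute)
      finally show ?thesis by simp
    qed
  qed
  then have "?R\<^sup>* \<subseteq> ?S\<^sup>*" by (metis rtrancl_subset_rtrancl rtrancl_idemp)
  moreover have "?S\<^sup>* \<subseteq> ?R\<^sup>*" using sub by (intro rtrancl_mono) auto
  ultimately have "?R\<^sup>* = ?S\<^sup>*" by blast
  then show ?thesis unfolding components_def by simp
qed


lemma AE_pair_snd:
  assumes sf: "sigma_finite_measure M2" and ae: "AE y in M2. P y"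
  shows "AE x in M1 \<Otimes>\<^sub>M M2. P (snd x)"
proof -
  from ae obtain N where N: "{y \<in> space M2. \<not> P y} \<subseteq> N" "emeasure M2 N = 0" "N \<in> sets M2"
    by (rule AE_E)
  have "space M1 \<times> N \<in> null_sets (M1 \<Otimes>\<^sub>M M2)"
    using N by (intro sigma_finite_measure.times_in_null_sets2[OF sf]) auto
  moreover have "{x \<in> space (M1 \<Otimes>\<^sub>M M2). \<not> P (snd x)} \<subseteq> space M1 \<times> N"
    using N by (auto simp: space_pair_measure)
  ultimately show ?thesis by (rule AE_I')
qed

lemma prob_uniform_cube:
  assumes "n \<ge> 1"
  shows "prob_space (uniform_measure lborel (torus_cube n :: (real^'d) set))"
proof (rule prob_space_uniform_measure)
  have le: "\<forall>b\<in>(Basis :: (real^'d) set). (\<chi> i. - real n / 2) \<bullet> b \<le> (\<chi> i. real n / 2) \<bullet> b"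
    by (auto simp: Basis_vec_def inner_axis)
  have eq: "\<And>b. b \<in> (Basis :: (real^'d) set) \<Longrightarrow> ((\<chi> i. real n / 2) - (\<chi> i. - real n / 2)) \<bullet> b = real n"
    by (auto simp: Basis_vec_def inner_axis)
  have "emeasure lborel (torus_cube n :: (real^'d) set) = (\<Prod>b\<in>(Basis :: (real^'d) set). ennreal (real n))"
    unfolding torus_cube_def emeasure_lborel_cbox_eq using le eq by (simp add: ennreal_power cong: prod.cong)
  also have "\<dots> = ennreal (real n) ^ card (Basis :: (real^'d) set)" by simp
  finally have E: "emeasure lborel (torus_cube n :: (real^'d) set) = ennreal (real n) ^ card (Basis :: (real^'d) set)" .
  show "emeasure lborel (torus_cube n :: (real^'d) set) \<noteq> 0" using assms unfolding E by simp
  show "emeasure lborel (torus_cube n :: (real^'d) set) \<noteq> \<infinity>" unfolding E by (simp add: ennreal_power)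
qed

lemma prob_M:
  assumes "n \<ge> 1" "prob_space PR"
  shows "prob_space (marked_point_law n PR :: ((real^'d) \<times> real) measure)"
  unfolding marked_point_law_def by (intro prob_space_pair prob_uniform_cube assms)

lemma AE_M_nonneg:
  assumes "prob_space PR" "AE r in PR. 0 \<le> r"
  shows "AE x in (marked_point_law n PR :: ((real^'d) \<times> real) measure). 0 \<le> snd x"
  unfolding marked_point_law_def
  by (rule AE_pair_snd[OF prob_space_imp_sigma_finite[OF assms(1)] assms(2)])

lemma AE_M_neq:
  assumes "prob_space PR" "sets PR = sets borel" "absolutely_continuous lborel PR"
  shows "AE x in (marked_point_law n PR :: ((real^'d) \<times> real) measure). snd x \<noteq> c"
proof -
  have "{c} \<in> null_sets lborel" by (intro countable_imp_null_set_lborel) auto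
  then have "{c} \<in> null_sets PR" using assms(3) unfolding absolutely_continuous_def by auto
  then have "AE r in PR. r \<notin> {c}" by (rule AE_not_in)
  then have "AE r in PR. r \<noteq> c" by simp
  then show ?thesis unfolding marked_point_law_def
    by (rule AE_pair_snd[OF prob_space_imp_sigma_finite[OF assms(1)]])
qed

lemma AE_MM_neq:
  fixes M :: "((real^'d) \<times> real) measure"
  assumes n: "n \<ge> 1" and P: "prob_space PR" "sets PR = sets borel" "absolutely_continuous lborel PR"
    and M: "M = marked_point_law n PR"
  shows "AE p in M \<Otimes>\<^sub>M M. snd (fst p) \<noteq> snd (snd p)"
proof -
  interpret pM: prob_space M using prob_M[OF n P(1)] M by simp
  interpret pair_sigma_finite M M by unfold_locales
  have ms: "snd \<in> measurable M PR" unfolding M marked_point_law_def by (rule measurable_snd)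
  have ms': "snd \<in> borel_measurable M" using ms measurable_cong_sets[OF refl P(2), where M=M] by simp
  have [measurable]: "(\<lambda>x. snd (fst x)) \<in> borel_measurable (M \<Otimes>\<^sub>M M)"
    using ms' by (rule measurable_compose[OF measurable_fst])
  have [measurable]: "(\<lambda>x. snd (snd x)) \<in> borel_measurable (M \<Otimes>\<^sub>M M)"
    using ms' by (rule measurable_compose[OF measurable_snd])
  have "Measurable.pred (M \<Otimes>\<^sub>M M) (\<lambda>x. snd (fst x) \<noteq> snd (snd x))" by measurable
  then have S: "{x \<in> space (M \<Otimes>\<^sub>M M). snd (fst x) \<noteq> snd (snd x)} \<in> sets (M \<Otimes>\<^sub>M M)"
    by (simp add: pred_def)
  show ?thesis
  proof (rule AE_pair_measure[OF S])
    show "AE x in M. AE y in M. snd (fst (x, y)) \<noteq> snd (snd (x, y))"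
    proof (rule AE_I2)
      fix x
      have "AE y in M. snd y \<noteq> snd x" unfolding M by (rule AE_M_neq[OF P])
      then show "AE y in M. snd (fst (x, y)) \<noteq> snd (snd (x, y))" by (rule eventually_mono) auto
    qed
  qed
qed

lemma distr_two:
  fixes M :: "'a measure"
  assumes pM: "prob_space M" and ij: "i \<noteq> (j::nat)"
  shows "distr (PiM UNIV (\<lambda>_. M)) (M \<Otimes>\<^sub>M M) (\<lambda>\<omega>. (\<omega> i, \<omega> j)) = M \<Otimes>\<^sub>M M"
proof -
  interpret pM: prob_space M by fact
  interpret P: product_prob_space "\<lambda>_::nat. M" UNIV by unfold_locales
  have meas: "(\<lambda>\<omega>. (\<omega> i, \<omega> j)) \<in> measurable (PiM UNIV (\<lambda>_. M)) (M \<Otimes>\<^sub>M M)"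
    by measurable
  show ?thesis
  proof (rule pair_measure_eqI[symmetric])
    show "sigma_finite_measure M" by unfold_locales
    show "sigma_finite_measure M" by unfold_locales
    show "sets (M \<Otimes>\<^sub>M M) = sets (distr (PiM UNIV (\<lambda>_. M)) (M \<Otimes>\<^sub>M M) (\<lambda>\<omega>. (\<omega> i, \<omega> j)))" by simp
    fix A B assume A: "A \<in> sets M" and B: "B \<in> sets M"
    define X where "X = (\<lambda>k. if k = i then A else B)"
    have "(\<lambda>\<omega>. (\<omega> i, \<omega> j)) -` (A \<times> B) \<inter> space (PiM UNIV (\<lambda>_. M))
        = {x \<in> space (PiM UNIV (\<lambda>_. M)). \<forall>k\<in>{i, j}. x k \<in> X k}"
      using ij by (auto simp: X_def)
    then have "emeasure (distr (PiM UNIV (\<lambda>_. M)) (M \<Otimes>\<^sub>M M) (\<lambda>\<omega>. (\<omega> i, \<omega> j))) (A \<times> B)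
        = emeasure (PiM UNIV (\<lambda>_. M)) {x \<in> space (PiM UNIV (\<lambda>_. M)). \<forall>k\<in>{i, j}. x k \<in> X k}"
      using A B meas by (simp add: emeasure_distr)
    also have "\<dots> = (\<Prod>k\<in>{i, j}. emeasure M (X k))"
      using A B by (intro P.emeasure_PiM_Collect) (auto simp: X_def)
    also have "\<dots> = emeasure M A * emeasure M B" using ij by (simp add: X_def)
    finally show "emeasure M A * emeasure M B = emeasure (distr (PiM UNIV (\<lambda>_. M)) (M \<Otimes>\<^sub>M M) (\<lambda>\<omega>. (\<omega> i, \<omega> j))) (A \<times> B)"
      by simp
  qed
qed

lemma AE_good:
  fixes M :: "((real^'d) \<times> real) measure"
  assumes n: "n \<ge> 1" and P: "prob_space PR" "sets PR = sets borel" "absolutely_continuous lborel PR"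
    and nn: "AE r in PR. 0 \<le> r"
    and M: "M = marked_point_law n PR"
  shows "AE \<omega> in PiM UNIV (\<lambda>_::nat. M). (\<forall>i. 0 \<le> snd (\<omega> i)) \<and> (\<forall>i j. i \<noteq> j \<longrightarrow> snd (\<omega> i) \<noteq> snd (\<omega> j))"
proof -
  have pM: "prob_space M" using prob_M[OF n P(1)] M by simp
  have 1: "AE \<omega> in PiM UNIV (\<lambda>_::nat. M). \<forall>i. 0 \<le> snd (\<omega> i)"
    unfolding AE_all_countable
  proof
    fix i :: nat
    show "AE \<omega> in PiM UNIV (\<lambda>_::nat. M). 0 \<le> snd (\<omega> i)"
      using AE_M_nonneg[OF P(1) nn, of n] M pM
      by (intro AE_PiM_component) auto
  qed
  have 2: "AE \<omega> in PiM UNIV (\<lambda>_::nat. M). \<forall>i j. i \<noteq> j \<longrightarrow> snd (\<omega> i) \<noteq> snd (\<omega> j)"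
    unfolding AE_all_countable
  proof (intro allI)
    fix i j :: nat
    show "AE \<omega> in PiM UNIV (\<lambda>_::nat. M). i \<noteq> j \<longrightarrow> snd (\<omega> i) \<noteq> snd (\<omega> j)"
    proof (cases "i = j")
      case True then show ?thesis by simp
    next
      case False
      have meas: "(\<lambda>\<omega>. (\<omega> i, \<omega> j)) \<in> measurable (PiM UNIV (\<lambda>_. M)) (M \<Otimes>\<^sub>M M)"
        by measurable
      have "AE p in distr (PiM UNIV (\<lambda>_. M)) (M \<Otimes>\<^sub>M M) (\<lambda>\<omega>. (\<omega> i, \<omega> j)). snd (fst p) \<noteq> snd (snd p)"
        unfolding distr_two[OF pM False] by (rule AE_MM_neq[OF n P M])
      from AE_distrD[OF meas this] show ?thesis by simp
    qed
  qed
  from 1 2 show ?thesis by (rule AE_conjI)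
qed


theorem proposition5p1:
  fixes n :: nat and PR :: "real measure" and \<beta> s :: real
  assumes d2: "CARD('d::finite) \<ge> 2"
    and n1: "n \<ge> 1"
    and prob: "prob_space PR"
    and borel: "sets PR = sets borel"
    and nonneg: "AE r in PR. 0 \<le> r"
    and abscont: "absolutely_continuous lborel PR"
    and beta_pos: "0 < \<beta>" and s_pos: "0 < s"
    and tail: "((\<lambda>h. h powr s * measure PR {h<..}) \<longlongrightarrow> \<beta>) at_top"
  shows "AE c in (poisson_space n PR :: (nat \<times> (nat \<Rightarrow> (real^'d) \<times> real)) measure).
           components (config c) (edges_G n (config c)) = components (config c) (edges_G' n (config c))"
proof -
  define M where "M = (marked_point_law n PR :: ((real^'d) \<times> real) measure)"
  have pM: "prob_space M" unfolding M_def by (rule prob_M[OF n1 prob])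
  have sfPM: "sigma_finite_measure (PiM UNIV (\<lambda>_::nat. M))"
    by (intro prob_space_imp_sigma_finite prob_space_PiM pM)
  have good: "AE \<omega> in PiM UNIV (\<lambda>_::nat. M). (\<forall>i. 0 \<le> snd (\<omega> i)) \<and> (\<forall>i j. i \<noteq> j \<longrightarrow> snd (\<omega> i) \<noteq> snd (\<omega> j))"
    by (rule AE_good[OF n1 prob borel abscont nonneg M_def])
  have "AE c in (poisson_space n PR :: (nat \<times> (nat \<Rightarrow> (real^'d) \<times> real)) measure).
      (\<forall>i. 0 \<le> snd (snd c i)) \<and> (\<forall>i j. i \<noteq> j \<longrightarrow> snd (snd c i) \<noteq> snd (snd c j))"
    unfolding poisson_space_def M_def[symmetric] by (rule AE_pair_snd[OF sfPM good])
  then show ?thesis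
  proof (rule eventually_mono)
    fix c :: "nat \<times> (nat \<Rightarrow> (real^'d) \<times> real)"
    assume g: "(\<forall>i. 0 \<le> snd (snd c i)) \<and> (\<forall>i j. i \<noteq> j \<longrightarrow> snd (snd c i) \<noteq> snd (snd c j))"
    show "components (config c) (edges_G n (config c)) = components (config c) (edges_G' n (config c))"
    proof (rule det_components)
      show "finite (config c)" unfolding config_def by simp
      show "\<And>p. p \<in> config c \<Longrightarrow> 0 \<le> snd p" using g unfolding config_def by auto
      fix p q assume p: "p \<in> config c" and q: "q \<in> config c" and e: "snd p = snd q"
      from p obtain i where i: "p = snd c i" unfolding config_def by auto
      from q obtain j where j: "q = snd c j" unfolding config_def by auto
      show "p = q"
      proof (cases "i = j")
        case True then show ?thesis using i j by simp
      next
        case False then show ?thesis using g e i j by blast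
      qed
    qed
  qed
qed

end
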